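(* Let $K\ge 1$ be an integer and let $\mathfrak{L}\subset\mathcal{P}^2_K(X)$ be a $\mathfrak{Q}_L$-clusterable family of mixing measures. Then the mixture model $\mathcal{M}(\mathfrak{L})=\{m(\Lambda):\Lambda\in\mathfrak{L}\}$ is identifiable, i.e. the map $m:\mathfrak{L}\to\mathcal{M}(\mathfrak{L})$, $\Lambda\mapsto m(\Lambda)$, is a bijection onto $\mathcal{M}(\mathfrak{L})$.
   Context: Let $(X,d)$ be a metric space and $\mathcal{P}(X)$ the space of regular Borel probability measures on $X$ with finite $r$-th moments ($r\ge1$), equipped with the Hellinger metric $\rho$. Let $\mathcal{P}^2(X)=\mathcal{P}(\mathcal{P}(X))$ (mixing measures), $\mathcal{P}^2_s(X)=\{\Lambda\in\mathcal{P}^2(X):|\mathrm{supp}(\Lambda)|\le s\}$, and for a family $\mathfrak{Q}\subset\mathcal{P}^2(X)$ write $\mathfrak{Q}_L=\mathfrak{Q}\cap\mathcal{P}^2_L(X)$. For a finitely supported $\Lambda=\sum_{k=1}^K\lambda_k\delta_{\gamma_k}$ define the mixture distribution $m(\Lambda)=\sum_k\lambda_k\gamma_k\in\mathcal{P}(X)$, and $\mathcal{M}(\mathfrak{L})=\{m(\Lambda):\Lambda\in\mathfrak{L}\}$; $\mathcal{M}(\mathfrak{L})$ is identifiable if $m$ is injective on $\mathfrak{L}$. Fix a base family $\mathfrak{Q}\subset\mathcal{P}^2(X)$ such that $\mathcal{M}(\mathfrak{Q}_L)$ is identifiable for each $L$ (e.g. Gaussian mixing measures). For $\Gamma\in\mathcal{P}(X)$,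 $T_L\Gamma$ is the set of $Q\in\mathcal{M}(\mathfrak{Q}_L)$ with $\rho(Q,\Gamma)\le\rho(P,\Gamma)$ for all $P\in\mathcal{M}(\mathfrak{Q}_L)$. When this is a single element $Q^*$, let $\Omega^*=\sum_{\ell=1}^L\omega^*_\ell\delta_{q^*_\ell}\in\mathfrak{Q}_L$ be its (unique) mixing measure; $M_L$ denotes the map $Q^*\mapsto\Omega^*$, and $M_L(\mathfrak{L})=\{M_L(T_L m(\Lambda)):\Lambda\in\mathfrak{L}\}$ (it is assumed $T_Lm(\Lambda)$ is a single element for every $\Lambda\in\mathfrak{L}$). Assignments: $\mathcal{A}_{L\to K}$ is the set of maps $\alpha:[L]\to[K]$; an assignment sequence is a sequence $\{\alpha_L\}$ with $\alpha_L\in\mathcal{A}_{L\to K}$. For $\Omega=\sum_{\ell=1}^L\omega_\ell\delta_{q_\ell}$ and $\alpha\in\mathcal{A}_{L\to K}$ put $\bar\omega_k(\alpha)=\sum_{\ell\in\alpha^{-1}(k)}\omega_\ell$, $\Omega_k(\alpha)=\bar\omega_k(\alpha)^{-1}\sum_{\ell\in\alpha^{-1}(k)}\omega_\ell\delta_{q_\ell}$, $Q_k(\alpha)=m(\Omega_k(\alpha))$, and $\Omega(\alpha)=\sum_{k=1}^K\bar\omega_k(\alpha)\delta_{Q_k(\alpha)}$. Applied to $\Omega^*$ these give $\bar\omega^*_k(\alpha),\Omega^*_k(\alpha),Q^*_k(\alpha)$. Regularity: $\Lambda=\sum_{k=1}^K\lambda_k\delta_{\gamma_k}\in\mathcal{P}^2_K(X)$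 with $\Gamma=m(\Lambda)$ is $\mathfrak{Q}_L$-regular if (a) there is $L_0$ such that $T_L\Gamma$ exists and is unique for all $L\ge L_0$ and $T_L\Gamma\to\Gamma$ (in $\rho$) as $L\to\infty$; and (b) there is an assignment sequence $\{\alpha_L\}$ with $Q^*_k(\alpha_L)\to\gamma_k$ in $\rho$ and $\bar\omega^*_k(\alpha_L)\to\lambda_k$ for all $k$. Assignment sequences satisfying (b) are called $\Lambda$-regular. Clusterability: $\mathfrak{L}\subset\mathcal{P}^2_K(X)$ is $\mathfrak{Q}_L$-clusterable if (a) every $\Lambda\in\mathfrak{L}$ is $\mathfrak{Q}_L$-regular, and (b) there exist functions $\chi_L:M_L(\mathfrak{L})\to\mathcal{A}_{L\to K}$ such that for every $\Lambda\in\mathfrak{L}$, with $\Omega^*_L=M_L(T_Lm(\Lambda))$, the sequence $\{\chi_L(\Omega^*_L)\}$ is $\Lambda$-regular. *)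

theory Defs
  imports "HOL-Probability.Probability"
begin

definition regular_borel :: "'a::metric_space measure \<Rightarrow> bool" where
  "regular_borel M \<longleftrightarrow>
     (\<forall>A\<in>sets M. emeasure M A = (INF U\<in>{U. open U \<and> A \<subseteq> U}. emeasure M U)
               \<and> emeasure M A = (SUP C\<in>{C. closed C \<and> C \<subseteq> A}. emeasure M C))"

definition PX :: "real \<Rightarrow> 'a::metric_space measure set" where
  "PX r = {M. sets M = sets borel \<and> prob_space M \<and> regular_borel M \<and>
              (\<exists>x0. (\<integral>\<^sup>+ x. ennreal (dist x0 x powr r) \<partial>M) < \<infinity>)}"

definition mixL :: "nat set \<Rightarrow> (nat \<Rightarrow> real) \<Rightarrow> (nat \<Rightarrow> 'a::metric_space measure) \<Rightarrow> 'a measure" where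
  "mixL I w q = measure_of UNIV (sets borel) (\<lambda>A. \<Sum>l\<in>I. ennreal (w l) * emeasure (q l) A)"

definition mix :: "'a::metric_space measure pmf \<Rightarrow> 'a measure" where
  "mix \<Lambda> = measure_of UNIV (sets borel)
              (\<lambda>A. \<Sum>\<gamma>\<in>set_pmf \<Lambda>. ennreal (pmf \<Lambda> \<gamma>) * emeasure \<gamma> A)"

definition hellinger :: "'a::metric_space measure \<Rightarrow> 'a measure \<Rightarrow> real" where
  "hellinger P Q =
     (let \<nu> = mixL {0,1} (\<lambda>_. 1/2) (\<lambda>i. if i = 0 then P else Q) in
      sqrt ((1/2) * (\<integral>x. (sqrt (enn2real (RN_deriv \<nu> P x)) - sqrt (enn2real (RN_deriv \<nu> Q x)))\<^sup>2 \<partial>\<nu>)))"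

definition P2 :: "real \<Rightarrow> nat \<Rightarrow> 'a::metric_space measure pmf set" where
  "P2 r s = {\<Lambda>. finite (set_pmf \<Lambda>) \<and> card (set_pmf \<Lambda>) \<le> s \<and> set_pmf \<Lambda> \<subseteq> PX r}"

definition represents :: "real \<Rightarrow> 'a::metric_space measure pmf \<Rightarrow> nat \<Rightarrow> (nat \<Rightarrow> real) \<Rightarrow> (nat \<Rightarrow> 'a measure) \<Rightarrow> bool" where
  "represents r \<Lambda> n w q \<longleftrightarrow> (\<forall>l<n. w l \<ge> 0 \<and> q l \<in> PX r) \<and>
      (\<forall>\<gamma>. pmf \<Lambda> \<gamma> = (\<Sum>l\<in>{l. l < n \<and> q l = \<gamma>}. w l))"

definition rep :: "real \<Rightarrow> nat \<Rightarrow> 'a::metric_space measure pmf \<Rightarrow> (nat \<Rightarrow> real) \<times> (nat \<Rightarrow> 'a measure)" where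
  "rep r L \<Omega> = (SOME (w, q). represents r \<Omega> L w q)"

definition QL :: "real \<Rightarrow> 'a::metric_space measure pmf set \<Rightarrow> nat \<Rightarrow> 'a measure pmf set" where
  "QL r Q L = Q \<inter> P2 r L"

definition TL :: "real \<Rightarrow> 'a::metric_space measure pmf set \<Rightarrow> nat \<Rightarrow> 'a measure \<Rightarrow> 'a measure set" where
  "TL r Q L \<Gamma> = {Q'\<in>mix ` QL r Q L. \<forall>P\<in>mix ` QL r Q L. hellinger Q' \<Gamma> \<le> hellinger P \<Gamma>}"

text \<open>Omega* = M_L(T_L Gamma): the mixing measure of the (unique) projection.\<close>
definition Omega_star :: "real \<Rightarrow> 'a::metric_space measure pmf set \<Rightarrow> nat \<Rightarrow> 'a measure \<Rightarrow> 'a measure pmf" where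
  "Omega_star r Q L \<Gamma> = (THE \<Omega>. \<Omega> \<in> QL r Q L \<and> mix \<Omega> \<in> TL r Q L \<Gamma>)"

definition assignments :: "nat \<Rightarrow> nat \<Rightarrow> (nat \<Rightarrow> nat) set" where
  "assignments L K = {\<alpha>. \<forall>l<L. \<alpha> l < K}"

definition bar_w :: "nat \<Rightarrow> (nat \<Rightarrow> real) \<Rightarrow> (nat \<Rightarrow> nat) \<Rightarrow> nat \<Rightarrow> real" where
  "bar_w L w \<alpha> k = (\<Sum>l\<in>{l. l < L \<and> \<alpha> l = k}. w l)"

definition Q_k :: "nat \<Rightarrow> (nat \<Rightarrow> real) \<Rightarrow> (nat \<Rightarrow> 'a::metric_space measure) \<Rightarrow> (nat \<Rightarrow> nat) \<Rightarrow> nat \<Rightarrow> 'a measure" where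
  "Q_k L w q \<alpha> k = mixL {l. l < L \<and> \<alpha> l = k} (\<lambda>l. w l / bar_w L w \<alpha> k) q"

definition Lambda_regular_seq ::
  "real \<Rightarrow> 'a::metric_space measure pmf set \<Rightarrow> nat \<Rightarrow> 'a measure pmf \<Rightarrow> (nat \<Rightarrow> real) \<Rightarrow> (nat \<Rightarrow> 'a measure)
     \<Rightarrow> (nat \<Rightarrow> nat \<Rightarrow> nat) \<Rightarrow> bool" where
  "Lambda_regular_seq r Q K \<Lambda> lam gam \<alpha>s \<longleftrightarrow>
     (\<forall>L. \<alpha>s L \<in> assignments L K) \<and>
     (\<forall>k<K.
        ((\<lambda>L. let (w, q) = rep r L (Omega_star r Q L (mix \<Lambda>))
              in hellinger (Q_k L w q (\<alpha>s L) k) (gam k)) \<longlonglongrightarrow> 0) \<and>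
        ((\<lambda>L. let (w, q) = rep r L (Omega_star r Q L (mix \<Lambda>))
              in bar_w L w (\<alpha>s L) k) \<longlonglongrightarrow> lam k))"

definition Q_regular ::
  "real \<Rightarrow> 'a::metric_space measure pmf set \<Rightarrow> nat \<Rightarrow> 'a measure pmf \<Rightarrow> (nat \<Rightarrow> real) \<Rightarrow> (nat \<Rightarrow> 'a measure) \<Rightarrow> bool" where
  "Q_regular r Q K \<Lambda> lam gam \<longleftrightarrow>
     represents r \<Lambda> K lam gam \<and>
     (\<exists>L0. (\<forall>L\<ge>L0. \<exists>Q'. TL r Q L (mix \<Lambda>) = {Q'}) \<and>
            ((\<lambda>L. hellinger (THE Q'. TL r Q L (mix \<Lambda>) = {Q'}) (mix \<Lambda>)) \<longlonglongrightarrow> 0)) \<and>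
     (\<exists>\<alpha>s. Lambda_regular_seq r Q K \<Lambda> lam gam \<alpha>s)"

text \<open>Clusterability: chi L acts on Omega*_L (whose labelling is given by rep).\<close>
definition Q_clusterable :: "real \<Rightarrow> 'a::metric_space measure pmf set \<Rightarrow> nat \<Rightarrow> 'a measure pmf set \<Rightarrow> bool" where
  "Q_clusterable r Q K \<LL> \<longleftrightarrow>
     (\<exists>(chi :: nat \<Rightarrow> 'a measure pmf \<Rightarrow> nat \<Rightarrow> nat).
        \<forall>\<Lambda>\<in>\<LL>. \<exists>lam gam. Q_regular r Q K \<Lambda> lam gam \<and>
           Lambda_regular_seq r Q K \<Lambda> lam gam (\<lambda>L. chi L (Omega_star r Q L (mix \<Lambda>))))"

end

theory Submission
  imports Defs
begin

lemma sets_mixL[simp]: "sets (mixL I w q) = sets borel"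
  unfolding mixL_def by (metis sets.sigma_sets_eq sets_measure_of space_borel sets.space_closed)

lemma space_mixL[simp]: "space (mixL I w q) = UNIV"
  using sets_eq_imp_space_eq[OF sets_mixL] by simp

lemma emeasure_mixL:
  assumes "finite I" "\<And>l. l \<in> I \<Longrightarrow> sets (q l) = sets borel" "S \<in> sets borel"
  shows "emeasure (mixL I w q) S = (\<Sum>l\<in>I. ennreal (w l) * emeasure (q l) S)"
  unfolding mixL_def
proof (rule emeasure_measure_of_sigma)
  show "sigma_algebra UNIV (sets borel)"
    by (metis sets.sigma_algebra_axioms space_borel)
  show "positive (sets borel) (\<lambda>A. \<Sum>l\<in>I. ennreal (w l) * emeasure (q l) A)"
    unfolding positive_def by simp
  show "countably_additive (sets borel) (\<lambda>A. \<Sum>l\<in>I. ennreal (w l) * emeasure (q l) A)"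
    unfolding countably_additive_def
  proof (intro allI impI)
    fix A :: "nat \<Rightarrow> 'a set"
    assume A: "range A \<subseteq> sets borel" "disjoint_family A"
    have "(\<Sum>i. \<Sum>l\<in>I. ennreal (w l) * emeasure (q l) (A i))
        = (\<Sum>l\<in>I. \<Sum>i. ennreal (w l) * emeasure (q l) (A i))"
      by (rule suminf_sum) (rule summableI)
    also have "\<dots> = (\<Sum>l\<in>I. ennreal (w l) * emeasure (q l) (\<Union>i. A i))"
    proof (rule sum.cong[OF refl])
      fix l assume "l \<in> I"
      then have "range A \<subseteq> sets (q l)" using A assms(2) by auto
      then show "(\<Sum>i. ennreal (w l) * emeasure (q l) (A i)) = ennreal (w l) * emeasure (q l) (\<Union>i. A i)"
        using suminf_emeasure[of A "q l"] A by simp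
    qed
    finally show "(\<Sum>i. \<Sum>l\<in>I. ennreal (w l) * emeasure (q l) (A i)) =
       (\<Sum>l\<in>I. ennreal (w l) * emeasure (q l) (\<Union> (range A)))" .
  qed
qed (fact)

lemma young_aux:
  fixes x y e :: real
  assumes e: "e > 0"
  shows "x * y \<le> x\<^sup>2 / (2*e) + e * y\<^sup>2 / 2"
proof -
  have "0 \<le> (x - e * y)\<^sup>2" by simp
  then have h: "2*e*(x*y) \<le> x\<^sup>2 + e\<^sup>2 * y\<^sup>2"
    unfolding power2_diff power_mult_distrib by (simp add: algebra_simps)
  have "x * y = (2*e*(x*y)) / (2*e)" using e by simp
  also have "\<dots> \<le> (x\<^sup>2 + e\<^sup>2 * y\<^sup>2) / (2*e)" using h e by (intro divide_right_mono) auto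
  also have "\<dots> = x\<^sup>2 / (2*e) + e * y\<^sup>2 / 2" using e by (simp add: add_divide_distrib power2_eq_square)
  finally show ?thesis .
qed

lemma pw_bound:
  fixes p q e :: real
  assumes "p \<ge> 0" "q \<ge> 0" "e > 0"
  shows "\<bar>p - q\<bar> \<le> (sqrt p - sqrt q)\<^sup>2 / (2*e) + e * (p + q)"
proof -
  define a where "a = sqrt p"
  define b where "b = sqrt q"
  have a: "a \<ge> 0" "p = a\<^sup>2" using assms by (auto simp: a_def)
  have b: "b \<ge> 0" "q = b\<^sup>2" using assms by (auto simp: b_def)
  have "a\<^sup>2 - b\<^sup>2 = (a - b) * (a + b)" by (simp add: power2_eq_square algebra_simps)
  then have "\<bar>a\<^sup>2 - b\<^sup>2\<bar> = \<bar>a - b\<bar> * (a + b)" using a b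
    by (simp add: abs_mult)
  also have "\<dots> \<le> \<bar>a - b\<bar>\<^sup>2 / (2*e) + e * (a + b)\<^sup>2 / 2"
    by (rule young_aux[OF assms(3)])
  also have "\<dots> \<le> (a - b)\<^sup>2 / (2*e) + e * (a\<^sup>2 + b\<^sup>2)"
  proof -
    have "0 \<le> (a - b)\<^sup>2" by simp
    then have "(a + b)\<^sup>2 / 2 \<le> a\<^sup>2 + b\<^sup>2" unfolding power2_sum power2_diff by simp
    then have "e * ((a + b)\<^sup>2 / 2) \<le> e * (a\<^sup>2 + b\<^sup>2)" using assms(3) by (intro mult_left_mono) auto
    moreover have "\<bar>a - b\<bar>\<^sup>2 = (a - b)\<^sup>2" by simp
    ultimately show ?thesis by simp
  qed
  finally show ?thesis unfolding a_def b_def using assms by simp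
qed

lemma hell_key:
  fixes A B :: "'a::metric_space measure"
  assumes sA: "sets A = sets borel" and sB: "sets B = sets borel"
    and fA: "finite_measure A" and fB: "finite_measure B"
    and S: "S \<in> sets borel" and e: "e > 0"
  shows "\<bar>measure A S - measure B S\<bar> \<le> (hellinger A B)\<^sup>2 / e + e * (measure A UNIV + measure B UNIV)"
proof -
  define q where "q = (\<lambda>i::nat. if i = 0 then A else B)"
  define \<nu> where "\<nu> = mixL {0,1} (\<lambda>_. 1/2) q"
  have sq: "\<And>l. l \<in> {0,1} \<Longrightarrow> sets (q l) = sets borel" using sA sB by (auto simp: q_def)
  have em: "emeasure \<nu> X = ennreal (1/2) * emeasure A X + ennreal (1/2) * emeasure B X"
    if "X \<in> sets borel" for X
    using emeasure_mixL[where I="{0,1}" and q=q and w="\<lambda>_. 1/2", OF _ sq that] by (simp add: \<nu>_def q_def)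
  have snu: "sets \<nu> = sets borel" by (simp add: \<nu>_def)
  have spnu: "space \<nu> = UNIV" by (simp add: \<nu>_def)
  have spA: "space A = UNIV" using sets_eq_imp_space_eq[OF sA] by simp
  have spB: "space B = UNIV" using sets_eq_imp_space_eq[OF sB] by simp
  interpret A: finite_measure A by fact
  interpret B: finite_measure B by fact
  have "finite_measure \<nu>"
  proof
    have "emeasure \<nu> (space \<nu>) = ennreal (1/2) * emeasure A UNIV + ennreal (1/2) * emeasure B UNIV"
      by (simp add: spnu em)
    also have "\<dots> \<noteq> \<infinity>" using A.emeasure_finite[of UNIV] B.emeasure_finite[of UNIV]
      by (simp add: ennreal_mult_eq_top_iff)
    finally show "emeasure \<nu> (space \<nu>) \<noteq> \<infinity>" .
  qed
  then interpret N: finite_measure \<nu> .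
  have acA: "absolutely_continuous \<nu> A"
    unfolding absolutely_continuous_def
  proof
    fix X assume "X \<in> null_sets \<nu>"
    then have X: "X \<in> sets borel" "emeasure \<nu> X = 0" using snu by auto
    then have "emeasure A X = 0" using em[OF X(1)] by (simp add: ennreal_mult_eq_top_iff)
    then show "X \<in> null_sets A" using X sA by auto
  qed
  have acB: "absolutely_continuous \<nu> B"
    unfolding absolutely_continuous_def
  proof
    fix X assume "X \<in> null_sets \<nu>"
    then have X: "X \<in> sets borel" "emeasure \<nu> X = 0" using snu by auto
    then have "emeasure B X = 0" using em[OF X(1)] by (simp add: ennreal_mult_eq_top_iff)
    then show "X \<in> null_sets B" using X sB by auto
  qed
  have sAn: "sets A = sets \<nu>" and sBn: "sets B = sets \<nu>" using sA sB snu by auto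
  define p1 where "p1 = (\<lambda>x. enn2real (RN_deriv \<nu> A x))"
  define p2 where "p2 = (\<lambda>x. enn2real (RN_deriv \<nu> B x))"
  have p1m[measurable]: "p1 \<in> borel_measurable \<nu>" by (simp add: p1_def)
  have p2m[measurable]: "p2 \<in> borel_measurable \<nu>" by (simp add: p2_def)
  have p1n: "\<And>x. p1 x \<ge> 0" and p2n: "\<And>x. p2 x \<ge> 0" by (auto simp: p1_def p2_def)
  have intA: "integral\<^sup>L A f = (\<integral>x. p1 x * f x \<partial>\<nu>)" "integrable A f = integrable \<nu> (\<lambda>x. p1 x * f x)"
    if "f \<in> borel_measurable \<nu>" for f :: "'a \<Rightarrow> real"
    using N.RN_deriv_integral[OF A.sigma_finite_measure acA sAn that]
      N.RN_deriv_integrable[OF A.sigma_finite_measure acA sAn that] by (auto simp: p1_def)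
  have intB: "integral\<^sup>L B f = (\<integral>x. p2 x * f x \<partial>\<nu>)" "integrable B f = integrable \<nu> (\<lambda>x. p2 x * f x)"
    if "f \<in> borel_measurable \<nu>" for f :: "'a \<Rightarrow> real"
    using N.RN_deriv_integral[OF B.sigma_finite_measure acB sBn that]
      N.RN_deriv_integrable[OF B.sigma_finite_measure acB sBn that] by (auto simp: p2_def)
  have ip1: "integrable \<nu> p1" using intA(2)[of "\<lambda>_. 1"] by simp
  have ip2: "integrable \<nu> p2" using intB(2)[of "\<lambda>_. 1"] by simp
  have SA: "measure A S = (\<integral>x. p1 x * indicator S x \<partial>\<nu>)"
    using intA(1)[of "indicator S"] S snu spA by simp
  have SB: "measure B S = (\<integral>x. p2 x * indicator S x \<partial>\<nu>)"
    using intB(1)[of "indicator S"] S snu spB by simp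
  have UA: "measure A UNIV = (\<integral>x. p1 x \<partial>\<nu>)" using intA(1)[of "\<lambda>_. 1"] spA by simp
  have UB: "measure B UNIV = (\<integral>x. p2 x \<partial>\<nu>)" using intB(1)[of "\<lambda>_. 1"] spB by simp
  define D where "D = (\<lambda>x. (sqrt (p1 x) - sqrt (p2 x))\<^sup>2)"
  have iD: "integrable \<nu> D"
  proof (rule Bochner_Integration.integrable_bound[of _ "\<lambda>x. p1 x + p2 x"])
    show "integrable \<nu> (\<lambda>x. p1 x + p2 x)" using ip1 ip2 by simp
    show "D \<in> borel_measurable \<nu>" unfolding D_def by measurable
    show "AE x in \<nu>. norm (D x) \<le> norm (p1 x + p2 x)"
    proof (rule AE_I2)
      fix x
      have "(sqrt (p1 x) - sqrt (p2 x))\<^sup>2 \<le> p1 x + p2 x"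
        using p1n[of x] p2n[of x]
        unfolding power2_diff using p1n[of x] p2n[of x] by simp
      then show "norm (D x) \<le> norm (p1 x + p2 x)" using p1n[of x] p2n[of x] by (simp add: D_def)
    qed
  qed
  have hel: "(hellinger A B)\<^sup>2 = (1/2) * (\<integral>x. D x \<partial>\<nu>)"
  proof -
    have "hellinger A B = sqrt ((1/2) * (\<integral>x. D x \<partial>\<nu>))"
      unfolding hellinger_def Let_def D_def p1_def p2_def \<nu>_def q_def by simp
    moreover have "(\<integral>x. D x \<partial>\<nu>) \<ge> 0" by (rule integral_nonneg_AE) (simp add: D_def)
    ultimately show ?thesis by simp
  qed
  have "\<bar>measure A S - measure B S\<bar> = \<bar>\<integral>x. (p1 x - p2 x) * indicator S x \<partial>\<nu>\<bar>"
  proof -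
    have "(\<integral>x. (p1 x - p2 x) * indicator S x \<partial>\<nu>) = (\<integral>x. p1 x * indicator S x - p2 x * indicator S x \<partial>\<nu>)"
      by (simp add: left_diff_distrib)
    also have "\<dots> = measure A S - measure B S" unfolding SA SB
      by (rule Bochner_Integration.integral_diff) (use S snu ip1 ip2 in \<open>auto intro!: integrable_real_mult_indicator\<close>)
    finally show ?thesis by simp
  qed
  also have "\<dots> \<le> (\<integral>x. \<bar>(p1 x - p2 x) * indicator S x\<bar> \<partial>\<nu>)"
    using integral_norm_bound[of \<nu> "\<lambda>x. (p1 x - p2 x) * indicator S x"] by simp
  also have "\<dots> \<le> (\<integral>x. D x / (2*e) + e * (p1 x + p2 x) \<partial>\<nu>)"
  proof (rule integral_mono)
    show "integrable \<nu> (\<lambda>x. \<bar>(p1 x - p2 x) * indicator S x\<bar>)"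
      using S snu ip1 ip2 by (auto intro!: integrable_real_mult_indicator)
    show "integrable \<nu> (\<lambda>x. D x / (2*e) + e * (p1 x + p2 x))"
      using iD ip1 ip2 by auto
    fix x
    have "\<bar>(p1 x - p2 x) * indicator S x\<bar> \<le> \<bar>p1 x - p2 x\<bar>" by (simp add: indicator_def)
    also have "\<dots> \<le> D x / (2*e) + e * (p1 x + p2 x)"
      unfolding D_def by (rule pw_bound[OF p1n p2n e])
    finally show "\<bar>(p1 x - p2 x) * indicator S x\<bar> \<le> D x / (2*e) + e * (p1 x + p2 x)" .
  qed
  also have "\<dots> = (\<integral>x. D x \<partial>\<nu>) / (2*e) + e * (measure A UNIV + measure B UNIV)"
    unfolding UA UB using iD ip1 ip2 by simp
  also have "\<dots> = (hellinger A B)\<^sup>2 / e + e * (measure A UNIV + measure B UNIV)"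
    unfolding hel by simp
  finally show ?thesis .
qed

lemma hellinger_nonneg: "hellinger A B \<ge> 0"
  unfolding hellinger_def Let_def by simp

lemma hell_close:
  fixes A B :: "'a::metric_space measure"
  assumes sA: "sets A = sets borel" and sB: "sets B = sets borel"
    and fA: "finite_measure A" and pB: "prob_space B"
    and S: "S \<in> sets borel" and d: "d > 0"
    and h1: "hellinger A B < 1" and h2: "hellinger A B < sqrt (d/32 * d / 4)"
  shows "\<bar>measure A S - measure B S\<bar> < d / 2"
proof -
  have fB: "finite_measure B" using pB by (simp add: prob_space_def)
  have mB: "measure B UNIV = 1"
    using prob_space.prob_space[OF pB] sets_eq_imp_space_eq[OF sB] by simp
  define h where "h = hellinger A B"
  have h0: "h \<ge> 0" unfolding h_def by (rule hellinger_nonneg)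
  have hsq1: "h\<^sup>2 \<le> 1" using h0 h1 unfolding h_def[symmetric] by (simp add: power_le_one)
  define a where "a = measure A UNIV"
  have "\<bar>measure A UNIV - measure B UNIV\<bar> \<le> h\<^sup>2 / (1/2) + (1/2) * (measure A UNIV + measure B UNIV)"
    using hell_key[OF sA sB fA fB _, of UNIV "1/2"] unfolding h_def by simp
  then have "\<bar>a - 1\<bar> \<le> 2 * h\<^sup>2 + (1/2) * (a + 1)" unfolding a_def mB by simp
  moreover have "a - 1 \<le> \<bar>a - 1\<bar>" by simp
  ultimately have a7: "a \<le> 7" using hsq1 by argo
  have a0: "a \<ge> 0" unfolding a_def by simp
  define e where "e = d / 32"
  have e: "e > 0" using d by (simp add: e_def)
  have key: "\<bar>measure A S - measure B S\<bar> \<le> h\<^sup>2 / e + e * (a + 1)"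
    using hell_key[OF sA sB fA fB S e] unfolding h_def a_def mB by simp
  have "h\<^sup>2 < (sqrt (e * d / 4))\<^sup>2"
    using h0 h2 unfolding h_def[symmetric] e_def by (intro power_strict_mono) auto
  then have "h\<^sup>2 < e * d / 4" using e d by simp
  then have t1: "h\<^sup>2 / e < d / 4" using e by (simp add: divide_simps mult.commute)
  have "e * (a + 1) \<le> e * 8" using e a7 by (intro mult_left_mono) auto
  then have t2: "e * (a + 1) \<le> d / 4" unfolding e_def by simp
  show ?thesis using key t1 t2 by linarith
qed

lemma hell_unique:
  fixes A :: "nat \<Rightarrow> 'a::metric_space measure" and B C :: "'a measure"
  assumes sB: "sets B = sets borel" and sC: "sets C = sets borel"
    and pB: "prob_space B" and pC: "prob_space C"
    and ev: "eventually (\<lambda>n. sets (A n) = sets borel \<and> finite_measure (A n)) sequentially"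
    and hB: "(\<lambda>n. hellinger (A n) B) \<longlonglongrightarrow> 0"
    and hC: "(\<lambda>n. hellinger (A n) C) \<longlonglongrightarrow> 0"
  shows "B = C"
proof -
  have eq: "measure B S = measure C S" if S: "S \<in> sets borel" for S
  proof (rule ccontr)
    assume ne: "measure B S \<noteq> measure C S"
    define d where "d = \<bar>measure B S - measure C S\<bar>"
    have d: "d > 0" using ne by (simp add: d_def)
    define \<delta> where "\<delta> = min 1 (sqrt (d/32 * d / 4))"
    have \<delta>: "\<delta> > 0" using d by (simp add: \<delta>_def)
    have "eventually (\<lambda>n. hellinger (A n) B < \<delta>) sequentially"
      using order_tendstoD(2)[OF hB \<delta>] .
    moreover have "eventually (\<lambda>n. hellinger (A n) C < \<delta>) sequentially"
      using order_tendstoD(2)[OF hC \<delta>] .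
    ultimately have "eventually (\<lambda>n. (sets (A n) = sets borel \<and> finite_measure (A n)) \<and>
        hellinger (A n) B < \<delta> \<and> hellinger (A n) C < \<delta>) sequentially"
      using ev by eventually_elim auto
    then obtain n where n: "sets (A n) = sets borel" "finite_measure (A n)"
        "hellinger (A n) B < \<delta>" "hellinger (A n) C < \<delta>"
      unfolding eventually_sequentially by blast
    have 1: "\<bar>measure (A n) S - measure B S\<bar> < d / 2"
      using hell_close[OF n(1) sB n(2) pB S d] n(3) unfolding \<delta>_def by simp
    have 2: "\<bar>measure (A n) S - measure C S\<bar> < d / 2"
      using hell_close[OF n(1) sC n(2) pC S d] n(4) unfolding \<delta>_def by simp
    show False using 1 2 unfolding d_def by argo
  qed
  show ?thesis
  proof (rule measure_eqI)
    show "sets B = sets C" using sB sC by simp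
    fix X assume "X \<in> sets B"
    then have X: "X \<in> sets borel" using sB by simp
    show "emeasure B X = emeasure C X"
      using finite_measure.emeasure_eq_measure[of B] finite_measure.emeasure_eq_measure[of C] eq[OF X] pB pC
      by (simp add: prob_space_def)
  qed
qed

lemma PX_props: "M \<in> PX r \<Longrightarrow> sets M = sets borel \<and> prob_space M"
  unfolding PX_def by auto

lemma omega_star_in:
  assumes inj: "inj_on mix (QL r Q L)" and T: "TL r Q L \<Gamma> = {Q'}"
  shows "Omega_star r Q L \<Gamma> \<in> QL r Q L"
proof -
  have "Q' \<in> TL r Q L \<Gamma>" using T by simp
  then have "Q' \<in> mix ` QL r Q L" unfolding TL_def by simp
  then obtain \<Omega>0 where O0: "\<Omega>0 \<in> QL r Q L" "mix \<Omega>0 = Q'" by blast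
  have "Omega_star r Q L \<Gamma> = \<Omega>0"
    unfolding Omega_star_def
  proof (rule the_equality)
    show "\<Omega>0 \<in> QL r Q L \<and> mix \<Omega>0 \<in> TL r Q L \<Gamma>" using O0 T by simp
    fix \<Omega> assume "\<Omega> \<in> QL r Q L \<and> mix \<Omega> \<in> TL r Q L \<Gamma>"
    then show "\<Omega> = \<Omega>0" using O0 T inj_onD[OF inj] by auto
  qed
  then show ?thesis using O0 by simp
qed

lemma rep_exists:
  assumes "\<Omega> \<in> P2 r L"
  shows "\<exists>w q. represents r \<Omega> L w q"
proof -
  define S where "S = set_pmf \<Omega>"
  have fin: "finite S" and cL: "card S \<le> L" and SP: "S \<subseteq> PX r"
    using assms by (auto simp: P2_def S_def)
  obtain f where f: "bij_betw f {0..<card S} S" using ex_bij_betw_nat_finite[OF fin] by blast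
  define c where "c = card S"
  have Sne: "S \<noteq> {}" unfolding S_def by (rule set_pmf_not_empty)
  then have c0: "c > 0" using fin by (simp add: c_def card_gt_0_iff)
  have fS: "\<And>l. l < c \<Longrightarrow> f l \<in> S" using f by (auto simp: bij_betw_def c_def)
  define q where "q = (\<lambda>l. if l < c then f l else f 0)"
  define w where "w = (\<lambda>l. if l < c then pmf \<Omega> (f l) else 0)"
  have "represents r \<Omega> L w q"
    unfolding represents_def
  proof (intro conjI allI impI)
    fix l assume "l < L"
    show "0 \<le> w l" by (simp add: w_def)
    show "q l \<in> PX r" using fS c0 SP by (auto simp: q_def)
  next
    fix \<gamma>
    have "(\<Sum>l\<in>{l. l < L \<and> q l = \<gamma>}. w l) = (\<Sum>l\<in>{l. l < c \<and> f l = \<gamma>}. w l)"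
    proof (rule sum.mono_neutral_right)
      show "finite {l. l < L \<and> q l = \<gamma>}" by simp
      show "{l. l < c \<and> f l = \<gamma>} \<subseteq> {l. l < L \<and> q l = \<gamma>}"
        using cL by (auto simp: q_def c_def)
      show "\<forall>i\<in>{l. l < L \<and> q l = \<gamma>} - {l. l < c \<and> f l = \<gamma>}. w i = 0"
        by (auto simp: q_def w_def)
    qed
    also have "\<dots> = pmf \<Omega> \<gamma>"
    proof (cases "\<gamma> \<in> S")
      case True
      then have "\<gamma> \<in> f ` {0..<c}" using f by (simp add: bij_betw_def c_def)
      then obtain j where j: "j < c" "f j = \<gamma>" by auto
      have "{l. l < c \<and> f l = \<gamma>} = {j}"
        using j f by (auto simp: bij_betw_def inj_on_def c_def)
      then show ?thesis using j by (simp add: w_def)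
    next
      case False
      then have e: "{l. l < c \<and> f l = \<gamma>} = {}" using fS by auto
      have "pmf \<Omega> \<gamma> = 0" using False by (simp add: S_def set_pmf_iff)
      then show ?thesis unfolding e by simp
    qed
    finally show "pmf \<Omega> \<gamma> = (\<Sum>l\<in>{l. l < L \<and> q l = \<gamma>}. w l)" by simp
  qed
  then show ?thesis by blast
qed

lemma rep_represents:
  assumes "\<Omega> \<in> P2 r L"
  shows "represents r \<Omega> L (fst (rep r L \<Omega>)) (snd (rep r L \<Omega>))"
proof -
  obtain w q where "represents r \<Omega> L w q" using rep_exists[OF assms] by blast
  then have "\<exists>x. (\<lambda>(w, q). represents r \<Omega> L w q) x" by auto
  then have "(\<lambda>(w, q). represents r \<Omega> L w q) (rep r L \<Omega>)" unfolding rep_def by (rule someI_ex)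
  then show ?thesis by (simp only: case_prod_beta)
qed

lemma Qk_finite:
  assumes "represents r \<Omega> L w q"
  shows "sets (Q_k L w q \<alpha> k) = sets borel \<and> finite_measure (Q_k L w q \<alpha> k)"
proof
  show "sets (Q_k L w q \<alpha> k) = sets borel" by (simp add: Q_k_def)
  define I where "I = {l. l < L \<and> \<alpha> l = k}"
  have qP: "\<And>l. l \<in> I \<Longrightarrow> q l \<in> PX r" using assms by (auto simp: represents_def I_def)
  have sq: "\<And>l. l \<in> I \<Longrightarrow> sets (q l) = sets borel" using qP PX_props by blast
  have "emeasure (Q_k L w q \<alpha> k) (space (Q_k L w q \<alpha> k))
      = (\<Sum>l\<in>I. ennreal (w l / bar_w L w \<alpha> k) * emeasure (q l) UNIV)"
  proof -
    have "emeasure (mixL I (\<lambda>l. w l / bar_w L w \<alpha> k) q) UNIV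
        = (\<Sum>l\<in>I. ennreal (w l / bar_w L w \<alpha> k) * emeasure (q l) UNIV)"
      by (rule emeasure_mixL) (auto simp: I_def sq)
    then show ?thesis unfolding Q_k_def I_def[symmetric] space_mixL .
  qed
  also have "\<dots> \<noteq> \<infinity>"
  proof -
    have "emeasure (q l) UNIV = 1" if "l \<in> I" for l
    proof -
      have "prob_space (q l)" "sets (q l) = sets borel" using PX_props[OF qP[OF that]] by auto
      moreover have "space (q l) = UNIV" using sets_eq_imp_space_eq[OF \<open>sets (q l) = sets borel\<close>] by simp
      ultimately show ?thesis using prob_space.emeasure_space_1 by metis
    qed
    then have "(\<Sum>l\<in>I. ennreal (w l / bar_w L w \<alpha> k) * emeasure (q l) UNIV) = (\<Sum>l\<in>I. ennreal (w l / bar_w L w \<alpha> k))"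
      by (intro sum.cong) auto
    also have "\<dots> < \<infinity>" by (simp add: I_def)
    finally show ?thesis by simp
  qed
  finally show "finite_measure (Q_k L w q \<alpha> k)" by (rule finite_measureI)
qed

theorem theorem1:
  fixes r :: real and K :: nat
    and Q :: "'a::metric_space measure pmf set"
    and \<LL> :: "'a measure pmf set"
  assumes "r \<ge> 1"
    and "\<And>L. inj_on mix (QL r Q L)"
    and "K \<ge> 1"
    and "\<LL> \<subseteq> P2 r K"
    and "Q_clusterable r Q K \<LL>"
  shows "bij_betw mix \<LL> (mix ` \<LL>)"
proof (rule bij_betw_imageI)
  note inj = assms(2)
  obtain chi :: "nat \<Rightarrow> 'a measure pmf \<Rightarrow> nat \<Rightarrow> nat" where chi:
    "\<And>\<Lambda>. \<Lambda> \<in> \<LL> \<Longrightarrow> \<exists>lam gam. Q_regular r Q K \<Lambda> lam gam \<and>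
           Lambda_regular_seq r Q K \<Lambda> lam gam (\<lambda>L. chi L (Omega_star r Q L (mix \<Lambda>)))"
    using assms(5) unfolding Q_clusterable_def by blast
  show "inj_on mix \<LL>"
  proof (rule inj_onI)
    fix \<Lambda>1 \<Lambda>2 assume L1: "\<Lambda>1 \<in> \<LL>" and L2: "\<Lambda>2 \<in> \<LL>" and eqm: "mix \<Lambda>1 = mix \<Lambda>2"
    obtain lam1 gam1 where r1: "Q_regular r Q K \<Lambda>1 lam1 gam1"
      and s1: "Lambda_regular_seq r Q K \<Lambda>1 lam1 gam1 (\<lambda>L. chi L (Omega_star r Q L (mix \<Lambda>1)))"
      using chi[OF L1] by blast
    obtain lam2 gam2 where r2: "Q_regular r Q K \<Lambda>2 lam2 gam2"
      and s2: "Lambda_regular_seq r Q K \<Lambda>2 lam2 gam2 (\<lambda>L. chi L (Omega_star r Q L (mix \<Lambda>2)))"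
      using chi[OF L2] by blast
    define \<Gamma> where "\<Gamma> = mix \<Lambda>1"
    define \<alpha>s where "\<alpha>s = (\<lambda>L. chi L (Omega_star r Q L \<Gamma>))"
    define R where "R = (\<lambda>L. rep r L (Omega_star r Q L \<Gamma>))"
    define A where "A = (\<lambda>k L. Q_k L (fst (R L)) (snd (R L)) (\<alpha>s L) k)"
    define B where "B = (\<lambda>k L. bar_w L (fst (R L)) (\<alpha>s L) k)"
    have rep1: "represents r \<Lambda>1 K lam1 gam1" using r1 unfolding Q_regular_def by blast
    have rep2: "represents r \<Lambda>2 K lam2 gam2" using r2 unfolding Q_regular_def by blast
    have c1: "\<And>k. k < K \<Longrightarrow> (\<lambda>L. hellinger (A k L) (gam1 k)) \<longlonglongrightarrow> 0 \<and> B k \<longlonglongrightarrow> lam1 k"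
      using s1 unfolding Lambda_regular_seq_def A_def B_def R_def \<alpha>s_def \<Gamma>_def
      by (simp add: case_prod_beta)
    have c2: "\<And>k. k < K \<Longrightarrow> (\<lambda>L. hellinger (A k L) (gam2 k)) \<longlonglongrightarrow> 0 \<and> B k \<longlonglongrightarrow> lam2 k"
      using s2 unfolding Lambda_regular_seq_def A_def B_def R_def \<alpha>s_def \<Gamma>_def eqm
      by (simp add: case_prod_beta)
    obtain L0 where L0: "\<And>L. L \<ge> L0 \<Longrightarrow> \<exists>Q'. TL r Q L \<Gamma> = {Q'}"
      using r1 unfolding Q_regular_def \<Gamma>_def by blast
    have ev: "eventually (\<lambda>L. sets (A k L) = sets borel \<and> finite_measure (A k L)) sequentially" for k
      unfolding eventually_sequentially
    proof (intro exI allI impI)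
      fix L assume "L \<ge> L0"
      then obtain Q' where "TL r Q L \<Gamma> = {Q'}" using L0 by blast
      then have "Omega_star r Q L \<Gamma> \<in> QL r Q L" using omega_star_in[OF inj] by blast
      then have "Omega_star r Q L \<Gamma> \<in> P2 r L" unfolding QL_def by blast
      from rep_represents[OF this] have "represents r (Omega_star r Q L \<Gamma>) L (fst (R L)) (snd (R L))"
        unfolding R_def .
      from Qk_finite[OF this] show "sets (A k L) = sets borel \<and> finite_measure (A k L)"
        unfolding A_def .
    qed
    have lam: "lam1 k = lam2 k" if k: "k < K" for k
      using c1[OF k] c2[OF k] LIMSEQ_unique by blast
    have gam: "gam1 k = gam2 k" if k: "k < K" for k
    proof (rule hell_unique[OF _ _ _ _ ev])
      have "gam1 k \<in> PX r" "gam2 k \<in> PX r" using rep1 rep2 k unfolding represents_def by auto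
      then show "sets (gam1 k) = sets borel" "sets (gam2 k) = sets borel"
        "prob_space (gam1 k)" "prob_space (gam2 k)" using PX_props by blast+
      show "(\<lambda>n. hellinger (A k n) (gam1 k)) \<longlonglongrightarrow> 0" using c1[OF k] by blast
      show "(\<lambda>n. hellinger (A k n) (gam2 k)) \<longlonglongrightarrow> 0" using c2[OF k] by blast
    qed
    show "\<Lambda>1 = \<Lambda>2"
    proof (rule pmf_eqI)
      fix \<gamma>
      have "pmf \<Lambda>1 \<gamma> = (\<Sum>l\<in>{l. l < K \<and> gam1 l = \<gamma>}. lam1 l)"
        using rep1 unfolding represents_def by blast
      also have "\<dots> = (\<Sum>l\<in>{l. l < K \<and> gam2 l = \<gamma>}. lam2 l)"
      proof -
        have "{l. l < K \<and> gam1 l = \<gamma>} = {l. l < K \<and> gam2 l = \<gamma>}" using gam by auto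
        then show ?thesis using lam by (intro sum.cong) auto
      qed
      also have "\<dots> = pmf \<Lambda>2 \<gamma>"
        using rep2 unfolding represents_def by (metis (no_types))
      finally show "pmf \<Lambda>1 \<gamma> = pmf \<Lambda>2 \<gamma>" .
    qed
  qed
qed simp

end
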